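(* Let $n\ge2$, $K\in\mathcal S_n$, let $0<R<1$ and assume $K\subseteq B(0,R)$ and $K^c\subseteq B(0,R)$. Then \[ B\Big(0,\sqrt{\tfrac54-R^2}-\tfrac12\Big)\subseteq K^c\cup(-K). \]
   Context: $B(x,r)$ is the closed Euclidean ball. For $A\subseteq\mathbb R^n$, $A^c=\bigcap_{x\in A}B(x,1)$ (with $\emptyset^c=\mathbb R^n$). $\mathcal S_n$ is the class of all sets of the form $\bigcap_{x\in A}B(x,1)$, $A\subseteq\mathbb R^n$. $-K=\{-x:x\in K\}$. *)

theory Defs
  imports "HOL-Analysis.Analysis"
begin

text \<open>The dual (spherical polar) of a set: intersection of closed unit balls centred at its
points; the empty intersection is the whole space.\<close>
definition ball_dual :: "'a::euclidean_space set \<Rightarrow> 'a set" where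
  "ball_dual A = (\<Inter>x\<in>A. cball x 1)"

definition S_class :: "'a::euclidean_space set set" where
  "S_class = {K. \<exists>A. K = ball_dual A}"

end

theory Submission
  imports Defs
begin

theorem theorem3p25:
  fixes K :: "'a::euclidean_space set" and R :: real
  assumes "DIM('a) \<ge> 2"
    and "K \<in> S_class"
    and "0 < R" and "R < 1"
    and "K \<subseteq> cball 0 R"
    and "ball_dual K \<subseteq> cball 0 R"
  shows "cball 0 (sqrt (5/4 - R\<^sup>2) - 1/2) \<subseteq> ball_dual K \<union> uminus ` K"
proof
  fix x :: 'a
  define s where "s = sqrt (5/4 - R\<^sup>2)"
  have s0: "s \<ge> 0" and s2: "s^2 = 5/4 - R^2"
  proof -
    have "R^2 < 1" using assms(3,4) by (simp add: power_less_one_iff)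
    then show "s \<ge> 0" "s^2 = 5/4 - R^2" unfolding s_def by auto
  qed
  assume "x \<in> cball 0 (sqrt (5/4 - R\<^sup>2) - 1/2)"
  then have hx: "norm x \<le> s - 1/2" by (simp add: s_def)
  show "x \<in> ball_dual K \<union> uminus ` K"
  proof (rule ccontr)
    assume "\<not> ?thesis"
    then have n1: "x \<notin> ball_dual K" and n2: "-x \<notin> K"
      by (auto simp: image_iff intro: bexI[where x="-x"])
    obtain A where KA: "K = ball_dual A" using assms(2) unfolding S_class_def by blast
    from n1 obtain y where y: "y \<in> K" "dist y x > 1"
      unfolding ball_dual_def by (auto simp: mem_cball not_le)
    from n2 obtain a where a: "a \<in> A" "dist a (-x) > 1"
      unfolding KA ball_dual_def by (auto simp: mem_cball not_le)
    have "a \<in> ball_dual K"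
      unfolding ball_dual_def using a(1) KA
      by (auto simp: ball_dual_def mem_cball dist_commute)
    then have na: "norm a \<le> R" using assms(6) by auto
    have ny: "norm y \<le> R" using assms(5) y(1) by auto
    have ya: "norm (y - a) \<le> 1"
      using \<open>a \<in> ball_dual K\<close> y(1) by (auto simp: ball_dual_def mem_cball dist_norm)
    have "norm (x - y) > 1" using y(2) by (simp add: dist_norm norm_minus_commute)
    then have e1: "(norm (x - y))^2 > 1" by (intro one_less_power) auto
    have "norm (x + a) > 1" using a(2) by (simp add: dist_norm add.commute)
    then have e2: "(norm (x + a))^2 > 1" by (intro one_less_power) auto
    have q1: "(norm (x - y))^2 = (norm x)^2 - 2 * (x \<bullet> y) + (norm y)^2"
      by (simp add: power2_norm_eq_inner inner_diff_left inner_diff_right inner_commute)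
    have q2: "(norm (x + a))^2 = (norm x)^2 + 2 * (x \<bullet> a) + (norm a)^2"
      by (simp add: power2_norm_eq_inner inner_add_left inner_add_right inner_commute)
    have cs: "\<bar>x \<bullet> (y - a)\<bar> \<le> norm x * norm (y - a)" by (rule Cauchy_Schwarz_ineq2)
    have "\<bar>x \<bullet> (y - a)\<bar> \<le> norm x"
      using cs ya by (metis mult_left_le norm_ge_zero order_trans)
    then have c: "x \<bullet> a - x \<bullet> y \<le> norm x" by (simp add: inner_diff_right)
    have "(norm y)^2 \<le> R^2" using ny by (simp add: power_mono)
    moreover have "(norm a)^2 \<le> R^2" using na by (simp add: power_mono)
    moreover have "(norm x + 1/2)^2 \<le> s^2"
      using hx by (intro power_mono) auto
    moreover have "(norm x + 1/2)^2 = (norm x)^2 + norm x + 1/4"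
      by (simp add: power2_eq_square algebra_simps)
    ultimately show False using e1 e2 q1 q2 c s2 by argo
  qed
qed

end
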